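(* Let $m\geq 2$ and let $f=a_0+a_1z+\cdots+a_mz^m\in\mathbb{Z}[z]$ be a primitive polynomial with $a_0a_m\neq 0$. Let $b$ be a positive divisor of $a_m$, and suppose there exist a real number $\gamma\geq|a_m|/b$ and an index $j$ with $0\leq j\leq m-1$ such that $$|a_j|>\sum_{0\leq i<j}|a_i|\,b^{j-i}\gamma^{j-i}+\sum_{j<i\leq m}\frac{|a_i|}{|a_m|^{i-j}}\gamma^{i-j},$$ where an empty sum is $0$. Then $f$ is a product of at most $m-j$ irreducible polynomials in $\mathbb{Z}[z]$. In particular, if $j=m-1$, then $f$ is irreducible in $\mathbb{Z}[z]$.
   Context: A polynomial in $\mathbb{Z}[z]$ is primitive if the greatest common divisor of its coefficients is $1$. "$f$ is a product of at most $r$ irreducible polynomials" means that in a factorization of $f$ into irreducible elements of $\mathbb{Z}[z]$, the number of factors (counted with multiplicity) is at most $r$. *)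

theory Defs
  imports "HOL-Computational_Algebra.Computational_Algebra"
begin

definition prod_at_most_irreducibles :: "int poly \<Rightarrow> nat \<Rightarrow> bool" where
  "prod_at_most_irreducibles f r \<longleftrightarrow>
     (\<exists>fs :: int poly list. length fs \<le> r \<and> (\<forall>g\<in>set fs. irreducible g) \<and> f = prod_list fs)"

end

theory Submission
  imports Defs "HOL-Complex_Analysis.Complex_Analysis"
begin

hide_const (open) Henstock_Kurzweil_Integration.content


lemma zorder_poly:
  fixes p :: "complex poly"
  assumes "p \<noteq> 0"
  shows "zorder (poly p) z = int (order z p)"
proof -
  obtain q where q: "p = [:-z,1:] ^ order z p * q" "\<not> [:-z,1:] dvd q"
    using order_decomp[OF assms] by blast
  have "poly q z \<noteq> 0" using q(2) by (simp add: poly_eq_0_iff_dvd)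
  show ?thesis
  proof (rule zorder_eqI[where S=UNIV and g="poly q"])
    show "poly q holomorphic_on UNIV" by (intro holomorphic_intros)
    show "poly q z \<noteq> 0" by fact
    fix w assume "w \<in> (UNIV::complex set)" "w \<noteq> z"
    show "poly p w = poly q w * (w - z) powi int (order z p)"
      by (subst q(1)) (simp add: poly_power mult.commute)
  qed auto
qed

lemma zorder_monom:
  fixes c :: complex
  assumes "c \<noteq> 0"
  shows "zorder (\<lambda>p. c * p ^ j) 0 = int j"
  by (rule zorder_eqI[where S=UNIV and g="\<lambda>_. c"]) (use assms in auto)

lemma rouche_count:
  fixes F :: "complex poly" and R :: real and c :: complex and j :: nat
  assumes F0: "F \<noteq> 0" and R0: "R > 0" and c0: "c \<noteq> 0"
    and dom: "\<And>z. cmod z = R \<Longrightarrow> cmod (poly F z - c * z^j) < cmod (c * z^j)"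
  shows "size (filter_mset (\<lambda>x. cmod x < R) (proots F)) = j"
proof -
  define f0 where "f0 = (\<lambda>z::complex. c * z^j)"
  define g0 where "g0 = (\<lambda>z::complex. poly F z - c * z^j)"
  define \<gamma> where "\<gamma> = circlepath (0::complex) R"
  have fg: "(\<lambda>p. f0 p + g0 p) = poly F" by (auto simp: f0_def g0_def)
  have nocirc: "cmod p \<noteq> R" if "poly F p = 0" for p
    using dom[of p] that by auto
  have R: "(\<Sum>p\<in>{p\<in>UNIV. (\<lambda>p. f0 p + g0 p) p = 0}. winding_number \<gamma> p * zorder (\<lambda>p. f0 p + g0 p) p)
          = (\<Sum>p\<in>{p\<in>UNIV. f0 p = 0}. winding_number \<gamma> p * zorder f0 p)"
  proof (rule Rouche_theorem)
    show "finite {p \<in> UNIV. f0 p + g0 p = 0}" using poly_roots_finite[OF F0] fg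
      by (metis (mono_tags, lifting) Collect_cong UNIV_I)
    show "finite {p \<in> UNIV. f0 p = 0}"
      by (rule finite_subset[of _ "{0}"]) (use c0 in \<open>auto simp: f0_def\<close>)
    show "f0 holomorphic_on UNIV" "g0 holomorphic_on UNIV" unfolding f0_def g0_def
      by (auto intro!: holomorphic_intros)
    show "valid_path \<gamma>" "pathfinish \<gamma> = pathstart \<gamma>" unfolding \<gamma>_def by auto
    show "\<forall>z\<in>path_image \<gamma>. cmod (g0 z) < cmod (f0 z)"
      using R0 dom unfolding \<gamma>_def f0_def g0_def by (auto simp: path_image_circlepath)
  qed auto
  have fg': "f0 p + g0 p = poly F p" for p by (simp add: f0_def g0_def)
  have R': "(\<Sum>p\<in>{p. poly F p = 0}. winding_number \<gamma> p * zorder (poly F) p)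
          = (\<Sum>p\<in>{p\<in>UNIV. f0 p = 0}. winding_number \<gamma> p * zorder f0 p)"
    using R by (simp add: fg')
  have lhs: "(\<Sum>p\<in>{p. poly F p = 0}. winding_number \<gamma> p * zorder (poly F) p)
      = (\<Sum>p\<in>{p. poly F p = 0}. if cmod p < R then of_nat (order p F) else 0)"
  proof (rule sum.cong)
    show "{p. poly F p = 0} = {p. poly F p = 0}" by simp
  next
    fix p assume p: "p \<in> {p. poly F p = 0}"
    show "winding_number \<gamma> p * of_int (zorder (poly F) p) = (if cmod p < R then of_nat (order p F) else 0)"
    proof (cases "cmod p < R")
      case True
      then have "winding_number \<gamma> p = 1" unfolding \<gamma>_def by (intro winding_number_circlepath) auto
      then show ?thesis using True by (simp add: zorder_poly[OF F0])
    next
      case False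
      with nocirc[of p] p have "cmod p > R" by auto
      then have "winding_number \<gamma> p = 0" unfolding \<gamma>_def using R0
        by (intro winding_number_zero_outside[of _ "cball 0 R"]) (auto simp: path_image_circlepath)
      then show ?thesis using False by simp
    qed
  qed
  also have "\<dots> = of_nat (\<Sum>p\<in>{p. poly F p = 0 \<and> cmod p < R}. order p F)"
    using poly_roots_finite[OF F0]
    by (simp add: sum.If_cases Collect_conj_eq[symmetric] Int_def conj_commute)
  also have "(\<Sum>p\<in>{p. poly F p = 0 \<and> cmod p < R}. order p F) = size (filter_mset (\<lambda>x. cmod x < R) (proots F))"
    by (subst size_multiset_overloaded_eq) (auto simp: F0 intro!: sum.cong)
  finally have L: "(\<Sum>p\<in>{p. poly F p = 0}. winding_number \<gamma> p * zorder (poly F) p)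
      = of_nat (size (filter_mset (\<lambda>x. cmod x < R) (proots F)))" .
  have rhs: "(\<Sum>p\<in>{p\<in>UNIV. f0 p = 0}. winding_number \<gamma> p * zorder f0 p) = of_nat j"
  proof (cases "j = 0")
    case True
    then have "{p\<in>UNIV. f0 p = 0} = {}" using c0 by (auto simp: f0_def)
    then show ?thesis using True by simp
  next
    case False
    then have "{p\<in>UNIV. f0 p = 0} = {0}" using c0 by (auto simp: f0_def)
    moreover have "winding_number \<gamma> 0 = 1" unfolding \<gamma>_def using R0 by (intro winding_number_circlepath) auto
    moreover have "zorder f0 0 = int j" unfolding f0_def by (rule zorder_monom[OF c0])
    ultimately show ?thesis by simp
  qed
  from R' L rhs have "(of_nat (size (filter_mset (\<lambda>x. cmod x < R) (proots F))) :: complex) = of_nat j" by simp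
  then show ?thesis using of_nat_eq_iff by blast
qed



lemma exists_irr_factors:
  fixes x :: "int poly" assumes "x \<noteq> 0" "\<not> is_unit x"
  shows "\<exists>fs. (\<forall>g\<in>set fs. irreducible g) \<and> x = prod_list fs"
proof -
  define M where "M = prime_factorization x"
  have "M \<noteq> {#}" using assms by (simp add: M_def prime_factorization_empty_iff)
  obtain xs where xs: "mset xs = M" using ex_mset by blast
  then obtain g rest where xs_eq: "xs = g # rest" using \<open>M\<noteq>{#}\<close> by (cases xs) auto
  have irr: "irreducible h" if "h \<in> set xs" for h
  proof -
    have "prime h" using in_prime_factors_imp_prime[of h x] that xs M_def by (metis set_mset_mset)
    then show ?thesis by (simp add: prime_elem_imp_irreducible)
  qed
  have "normalize x = normalize (prod_list xs)" using prod_mset_prime_factorization_weak[OF assms(1)] xs M_def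
    by (simp flip: prod_mset_prod_list)
  then obtain u where u: "is_unit u" "x = u * prod_list xs" by (rule associatedE1)
  moreover have "irreducible (u * g)"
    using irr[of g] xs_eq u(1) by (simp add: irreducible_mult_unit_left)
  ultimately show ?thesis using irr xs_eq
    by (intro exI[of _ "(u * g) # rest"]) (auto simp: mult.assoc)
qed

lemma mpi_add: "map_poly (of_int :: int \<Rightarrow> 'a::comm_ring_1) (p + q) = map_poly of_int p + map_poly of_int q"
  by (rule poly_eqI) (simp add: coeff_map_poly)
lemma mpi_smult: "map_poly (of_int :: int \<Rightarrow> 'a::comm_ring_1) (smult a q) = smult (of_int a) (map_poly of_int q)"
  by (rule poly_eqI) (simp add: coeff_map_poly)
lemma mpi_pCons: "map_poly (of_int :: int \<Rightarrow> 'a::comm_ring_1) (pCons a p) = pCons (of_int a) (map_poly of_int p)"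
  by (rule poly_eqI) (simp add: coeff_map_poly coeff_pCons split: nat.split)
lemma mpi_mult: "map_poly (of_int :: int \<Rightarrow> 'a::comm_ring_1) (p * q) = map_poly of_int p * map_poly of_int q"
  by (induction p) (simp_all add: mpi_add mpi_smult mpi_pCons)
lemma mpi_prod_list: "map_poly (of_int :: int \<Rightarrow> 'a::comm_ring_1) (prod_list ps) = prod_list (map (map_poly of_int) ps)"
  by (induction ps) (simp_all add: mpi_mult)
lemma mpi_degree: "degree (map_poly (of_int :: int \<Rightarrow> 'a::{comm_ring_1,ring_char_0}) p) = degree p"
  by (rule degree_map_poly) simp
lemma mpi_poly0: "poly (map_poly (of_int :: int \<Rightarrow> 'a::comm_ring_1) p) 0 = of_int (coeff p 0)"
  by (simp add: poly_0_coeff_0 coeff_map_poly)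


lemma key_bound:
  fixes f :: "int poly" and z :: complex and B \<gamma> A :: real
  assumes deg: "degree f = m" and jm: "j < m"
    and pos: "B > 0" "\<gamma> > 0" "A > 0"
    and t1: "B * \<gamma> * cmod z \<ge> 1" and t2: "cmod z \<le> \<gamma> / A"
  shows "cmod (poly (map_poly of_int f) z - of_int (coeff f j) * z^j)
     \<le> ((\<Sum>i<j. real_of_int \<bar>coeff f i\<bar> * B ^ (j - i) * \<gamma> ^ (j - i))
         + (\<Sum>i\<in>{j<..m}. real_of_int \<bar>coeff f i\<bar> / A ^ (i - j) * \<gamma> ^ (i - j))) * cmod z ^ j"
proof -
  define t where "t = cmod z"
  define c where "c = (\<lambda>i. (of_int (coeff f i) :: complex))"
  have t0: "t \<ge> 0" by (simp add: t_def)
  have P: "poly (map_poly of_int f) z = (\<Sum>i\<le>m. c i * z^i)"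
    by (simp add: poly_altdef mpi_degree deg coeff_map_poly c_def)
  have split: "{..m} = {..<j} \<union> insert j {j<..m}" using jm by auto
  have "(\<Sum>i\<le>m. c i * z^i) = (\<Sum>i<j. c i * z^i) + (c j * z^j + (\<Sum>i\<in>{j<..m}. c i * z^i))"
    by (subst split, subst sum.union_disjoint) (auto)
  then have D: "poly (map_poly of_int f) z - of_int (coeff f j) * z^j = (\<Sum>i<j. c i * z^i) + (\<Sum>i\<in>{j<..m}. c i * z^i)"
    using P by (simp add: c_def)
  have n1: "cmod (\<Sum>i<j. c i * z^i) \<le> (\<Sum>i<j. real_of_int \<bar>coeff f i\<bar> * B ^ (j - i) * \<gamma> ^ (j - i) * t ^ j)"
  proof (rule order_trans[OF norm_sum sum_mono])
    fix i assume "i \<in> {..<j}"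
    then have ij: "i < j" by simp
    have "1 \<le> (B * \<gamma> * t) ^ (j - i)" using t1 by (simp add: t_def one_le_power)
    then have "t ^ i \<le> t ^ i * (B * \<gamma> * t) ^ (j - i)" using t0 by (simp add: mult_le_cancel_left1)
    also have "\<dots> = B ^ (j - i) * \<gamma> ^ (j - i) * t ^ j"
      using ij by (simp add: power_mult_distrib power_add[symmetric])
    finally have "t ^ i \<le> B ^ (j - i) * \<gamma> ^ (j - i) * t ^ j" .
    then show "cmod (c i * z ^ i) \<le> real_of_int \<bar>coeff f i\<bar> * B ^ (j - i) * \<gamma> ^ (j - i) * t ^ j"
      by (simp add: c_def norm_mult norm_power t_def mult.assoc mult_left_mono)
  qed
  have n2: "cmod (\<Sum>i\<in>{j<..m}. c i * z^i) \<le> (\<Sum>i\<in>{j<..m}. real_of_int \<bar>coeff f i\<bar> / A ^ (i - j) * \<gamma> ^ (i - j) * t ^ j)"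
  proof (rule order_trans[OF norm_sum sum_mono])
    fix i assume "i \<in> {j<..m}"
    then have ij: "j < i" by simp
    have "t ^ (i - j) \<le> (\<gamma> / A) ^ (i - j)" using t2 t0 by (simp add: t_def power_mono)
    then have "t ^ i \<le> (\<gamma> / A) ^ (i - j) * t ^ j"
      using ij t0 by (metis le_add_diff_inverse2 less_or_eq_imp_le mult_right_mono power_add zero_le_power)
    also have "\<dots> = \<gamma> ^ (i - j) / A ^ (i - j) * t ^ j" by (simp add: power_divide)
    finally have "t ^ i \<le> \<gamma> ^ (i - j) / A ^ (i - j) * t ^ j" .
    then have "real_of_int \<bar>coeff f i\<bar> * t ^ i \<le> real_of_int \<bar>coeff f i\<bar> * (\<gamma> ^ (i - j) / A ^ (i - j) * t ^ j)"
      by (rule mult_left_mono) simp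
    also have "\<dots> = real_of_int \<bar>coeff f i\<bar> / A ^ (i - j) * \<gamma> ^ (i - j) * t ^ j"
      by simp
    finally show "cmod (c i * z ^ i) \<le> real_of_int \<bar>coeff f i\<bar> / A ^ (i - j) * \<gamma> ^ (i - j) * t ^ j"
      by (simp add: c_def norm_mult norm_power t_def)
  qed
  have "cmod (poly (map_poly of_int f) z - of_int (coeff f j) * z^j) \<le>
     (\<Sum>i<j. real_of_int \<bar>coeff f i\<bar> * B ^ (j - i) * \<gamma> ^ (j - i) * t ^ j) +
     (\<Sum>i\<in>{j<..m}. real_of_int \<bar>coeff f i\<bar> / A ^ (i - j) * \<gamma> ^ (i - j) * t ^ j)"
    unfolding D by (rule order_trans[OF norm_triangle_ineq add_mono[OF n1 n2]])
  then show ?thesis by (simp add: sum_distrib_right distrib_right t_def)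
qed



lemma count_big:
  fixes gs :: "int poly list" and R :: real
  assumes "\<forall>g\<in>set gs. map_poly (of_int::int\<Rightarrow>complex) g \<noteq> 0 \<and> (\<exists>x. poly (map_poly of_int g) x = 0 \<and> R < cmod x)"
  shows "length gs \<le> size (filter_mset (\<lambda>x. R < cmod x) (proots (map_poly (of_int::int\<Rightarrow>complex) (prod_list gs))))"
  using assms
proof (induction gs)
  case Nil
  then show ?case by simp
next
  case (Cons g gs)
  define G where "G = map_poly (of_int::int\<Rightarrow>complex) g"
  define H where "H = map_poly (of_int::int\<Rightarrow>complex) (prod_list gs)"
  have G0: "G \<noteq> 0" and ex: "\<exists>x. poly G x = 0 \<and> R < cmod x" using Cons.prems by (auto simp: G_def)
  have H0: "H \<noteq> 0" using Cons.prems by (auto simp: H_def mpi_prod_list prod_list_zero_iff)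
  obtain x where x: "poly G x = 0" "R < cmod x" using ex by blast
  have "x \<in># filter_mset (\<lambda>x. R < cmod x) (proots G)" using x G0 by simp
  then have "filter_mset (\<lambda>x. R < cmod x) (proots G) \<noteq> {#}" by auto
  then have s1: "1 \<le> size (filter_mset (\<lambda>x. R < cmod x) (proots G))"
    by (metis One_nat_def Suc_leI neq0_conv size_eq_0_iff_empty)
  have e: "map_poly of_int (prod_list (g # gs)) = G * H" by (simp add: G_def H_def mpi_mult)
  have IH: "length gs \<le> size (filter_mset (\<lambda>x. R < cmod x) (proots H))"
    unfolding H_def by (rule Cons.IH) (use Cons.prems in simp)
  have pm: "proots (G * H) = proots G + proots H" by (rule proots_mult[OF G0 H0])
  show ?case unfolding e pm using s1 IH by simp
qed

lemma prod_mset_bound: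
  fixes M :: "complex multiset"
  assumes "\<forall>x\<in>#M. cmod x < r" "M \<noteq> {#}"
  shows "cmod (poly (\<Prod>x\<in>#M. [:-x,1:]) 0) < r ^ size M"
  using assms
proof (induction M)
  case empty
  then show ?case by simp
next
  case (add x M)
  show ?case
  proof (cases "M = {#}")
    case True
    then show ?thesis using add.prems by simp
  next
    case False
    then have IH: "cmod (poly (\<Prod>x\<in>#M. [:-x,1:]) 0) < r ^ size M" using add by simp
    have xr: "cmod x < r" using add.prems by simp
    then have "0 < r" using norm_ge_zero[of x] by linarith
    have "cmod (poly (\<Prod>x\<in>#add_mset x M. [:-x,1:]) 0) = cmod x * cmod (poly (\<Prod>x\<in>#M. [:-x,1:]) 0)"
      by (simp add: norm_mult)
    also have "\<dots> < r * r ^ size M"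
      using xr IH \<open>0 < r\<close> by (intro mult_strict_mono) auto
    finally show ?thesis by simp
  qed
qed


theorem corollary5:
  fixes f :: "int poly" and m j :: nat and b :: int and \<gamma> :: real
  assumes "m \<ge> 2"
    and "degree f = m"
    and "content f = 1"
    and "coeff f 0 * coeff f m \<noteq> 0"
    and "b > 0" and "b dvd coeff f m"
    and "\<gamma> \<ge> \<bar>real_of_int (coeff f m)\<bar> / real_of_int b"
    and "j < m"
    and "real_of_int \<bar>coeff f j\<bar> >
           (\<Sum>i<j. real_of_int \<bar>coeff f i\<bar> * real_of_int b ^ (j - i) * \<gamma> ^ (j - i))
         + (\<Sum>i\<in>{j<..m}. real_of_int \<bar>coeff f i\<bar> / real_of_int \<bar>coeff f m\<bar> ^ (i - j) * \<gamma> ^ (i - j))"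
  shows "prod_at_most_irreducibles f (m - j)"
proof -
  note deg = assms(2) and jm = assms(8)
  define F where "F = map_poly (of_int::int\<Rightarrow>complex) f"
  define A where "A = real_of_int \<bar>coeff f m\<bar>"
  define B where "B = real_of_int b"
  define c where "c = (of_int (coeff f j) :: complex)"
  have am0: "coeff f m \<noteq> 0" and a00: "coeff f 0 \<noteq> 0" using assms(4) by auto
  have f0: "f \<noteq> 0" using am0 by auto
  have A1: "A \<ge> 1" using am0 by (simp add: A_def)
  have B0: "B > 0" using assms(5) by (simp add: B_def)
  have bA: "B \<le> A"
  proof -
    have "\<bar>b\<bar> \<le> \<bar>coeff f m\<bar>" using assms(6) am0 by (simp add: dvd_imp_le_int)
    then show ?thesis using assms(5) by (simp add: A_def B_def)
  qed
  have gA: "\<gamma> \<ge> A / B" using assms(7) by (simp add: A_def B_def)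
  have g1: "\<gamma> \<ge> 1"
  proof -
    have "A / B \<ge> 1" using bA B0 by simp
    then show ?thesis using gA by linarith
  qed
  have Bg: "B * \<gamma> \<ge> A" using gA B0 by (simp add: field_simps)
  define r where "r = 1 / (B * \<gamma>)"
  define Rr where "Rr = \<gamma> / A"
  have r0: "r > 0" using B0 g1 by (simp add: r_def)
  have Rr0: "Rr > 0" using A1 g1 by (simp add: Rr_def)
  have r1: "r \<le> 1 / A" unfolding r_def using Bg A1 by (intro divide_left_mono) auto
  have rA: "A * r \<le> 1" using r1 A1 by (simp add: field_simps)
  have iA: "1 / A \<le> 1" using A1 by simp
  have rle1: "r \<le> 1" using r1 iA by linarith
  have "1 / A \<le> \<gamma> / A" using g1 A1 by (intro divide_right_mono) auto
  then have rRr: "r \<le> Rr" using r1 unfolding Rr_def by linarith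
  define S where "S = (\<Sum>i<j. real_of_int \<bar>coeff f i\<bar> * B ^ (j - i) * \<gamma> ^ (j - i))
         + (\<Sum>i\<in>{j<..m}. real_of_int \<bar>coeff f i\<bar> / A ^ (i - j) * \<gamma> ^ (i - j))"
  have S0: "S \<ge> 0" unfolding S_def using B0 g1 A1
    by (intro add_nonneg_nonneg sum_nonneg) auto
  have hyp: "real_of_int \<bar>coeff f j\<bar> > S" using assms(9) by (simp add: S_def A_def B_def)
  have c0: "c \<noteq> 0" using hyp S0 by (auto simp: c_def)
  have dom: "cmod (poly F z - c * z^j) < cmod (c * z^j)" if "r \<le> cmod z" "cmod z \<le> Rr" for z
  proof -
    have t1: "B * \<gamma> * cmod z \<ge> 1" using that(1) B0 g1 unfolding r_def by (simp add: field_simps)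
    have tpos: "cmod z > 0" using that r0 by linarith
    have "cmod (poly F z - c * z^j) \<le> S * cmod z ^ j"
      unfolding F_def c_def S_def
      by (rule key_bound[OF deg jm B0 _ _ t1]) (use g1 A1 that in \<open>auto simp: Rr_def\<close>)
    also have "\<dots> < real_of_int \<bar>coeff f j\<bar> * cmod z ^ j"
      using hyp tpos by (intro mult_strict_right_mono) auto
    also have "\<dots> = cmod (c * z^j)" by (simp add: c_def norm_mult norm_power)
    finally show ?thesis .
  qed
  have noroot: "cmod x < r \<or> cmod x > Rr" if "poly F x = 0" for x
  proof (rule ccontr)
    assume "\<not> (cmod x < r \<or> cmod x > Rr)"
    then have "r \<le> cmod x" "cmod x \<le> Rr" by auto
    from dom[OF this] that show False by simp
  qed
  have degF: "degree F = m" by (simp add: F_def mpi_degree deg)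
  have F0: "F \<noteq> 0" using degF assms(1) by auto
  have small: "size (filter_mset (\<lambda>x. cmod x < Rr) (proots F)) = j"
    by (rule rouche_count[OF F0 Rr0 c0]) (use dom rRr in auto)
  have total: "size (proots F) = m" using degF by (simp add: size_proots_complex)
  have "filter_mset (\<lambda>x. \<not> cmod x < Rr) (proots F) = filter_mset (\<lambda>x. Rr < cmod x) (proots F)"
  proof (rule filter_mset_cong)
    fix x assume "x \<in># proots F"
    then have "poly F x = 0" using F0 by simp
    then show "(\<not> cmod x < Rr) = (Rr < cmod x)" using noroot[of x] rRr by auto
  qed simp
  then have big: "size (filter_mset (\<lambda>x. Rr < cmod x) (proots F)) = m - j"
  proof -
    have p: "filter_mset (\<lambda>x. cmod x < Rr) (proots F) + filter_mset (\<lambda>x. \<not> cmod x < Rr) (proots F) = proots F"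
      by (rule multiset_partition[symmetric])
    have "size (filter_mset (\<lambda>x. cmod x < Rr) (proots F) + filter_mset (\<lambda>x. \<not> cmod x < Rr) (proots F))
       = size (filter_mset (\<lambda>x. cmod x < Rr) (proots F)) + size (filter_mset (\<lambda>x. \<not> cmod x < Rr) (proots F))"
      by (rule size_union)
    then have "size (proots F) = size (filter_mset (\<lambda>x. cmod x < Rr) (proots F)) + size (filter_mset (\<lambda>x. \<not> cmod x < Rr) (proots F))"
      unfolding p .
    then have "m = j + size (filter_mset (\<lambda>x. \<not> cmod x < Rr) (proots F))"
      using total small by simp
    then show ?thesis using \<open>filter_mset (\<lambda>x. \<not> cmod x < Rr) (proots F) = filter_mset (\<lambda>x. Rr < cmod x) (proots F)\<close>
      by simp
  qed
  have nu: "\<not> is_unit f"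
  proof
    assume "is_unit f"
    then have "degree f = 0" by (auto simp: is_unit_poly_iff)
    then show False using deg assms(1) by simp
  qed
  obtain fs where fs: "\<forall>g\<in>set fs. irreducible g" "f = prod_list fs"
    using exists_irr_factors[OF f0 nu] by blast
  have each: "map_poly (of_int::int\<Rightarrow>complex) g \<noteq> 0 \<and> (\<exists>x. poly (map_poly of_int g) x = 0 \<and> Rr < cmod x)"
    if g: "g \<in> set fs" for g
  proof -
    define G where "G = map_poly (of_int::int\<Rightarrow>complex) g"
    have "g dvd f" using g fs(2) by (simp add: prod_list_dvd)
    then obtain h where fgh: "f = g * h" by (rule dvdE)
    have g0: "g \<noteq> 0" and h0: "h \<noteq> 0" using f0 fgh by auto
    have "coeff G (degree g) \<noteq> 0" using g0 by (simp add: G_def coeff_map_poly)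
    then have G0: "G \<noteq> 0" by auto
    have dg: "degree g \<ge> 1"
    proof (rule ccontr)
      assume "\<not> degree g \<ge> 1"
      then have "degree g = 0" by simp
      then have gc: "g = [:coeff g 0:]" by (rule degree_0_id[symmetric])
      have "[:coeff g 0:] dvd f" using \<open>g dvd f\<close> gc by simp
      then have "coeff g 0 dvd 1" using assms(3) by (simp add: const_poly_dvd_iff_dvd_content)
      then have "is_unit g" by (subst gc) (simp add: is_unit_const_poly_iff)
      then show False using fs(1) g irreducible_not_unit by blast
    qed
    have lc: "\<bar>lead_coeff g\<bar> \<le> \<bar>coeff f m\<bar>"
    proof -
      have "lead_coeff f = lead_coeff g * lead_coeff h" using fgh by (simp add: lead_coeff_mult)
      moreover have "lead_coeff h \<noteq> 0" using h0 by simp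
      then have "1 \<le> \<bar>lead_coeff h\<bar>" by arith
      ultimately have "\<bar>lead_coeff g\<bar> \<le> \<bar>lead_coeff f\<bar>"
        by (simp add: abs_mult mult_le_cancel_left1)
      then show ?thesis using deg by simp
    qed
    have cg0: "coeff g 0 \<noteq> 0" using a00 fgh by (auto simp: coeff_mult_0)
    have FGH: "F = G * map_poly of_int h" unfolding F_def G_def by (simp add: fgh mpi_mult)
    show ?thesis
    proof (rule ccontr)
      assume "\<not> ?thesis"
      then have nb: "\<And>x. poly G x = 0 \<Longrightarrow> \<not> Rr < cmod x" using G0 by (auto simp: G_def)
      have sm: "\<forall>x\<in>#proots G. cmod x < r"
      proof
        fix x assume "x \<in># proots G"
        then have "poly G x = 0" using G0 by simp
        then have "poly F x = 0" using FGH by simp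
        then show "cmod x < r" using noroot[of x] nb[OF \<open>poly G x = 0\<close>] by auto
      qed
      have dG: "size (proots G) = degree g" by (simp add: size_proots_complex G_def mpi_degree)
      then have ne: "proots G \<noteq> {#}" using dg by auto
      have "poly G 0 = lead_coeff G * poly (\<Prod>x\<in>#proots G. [:-x,1:]) 0"
        by (subst (1) complex_poly_decompose_multiset[symmetric, of G]) simp
      then have "cmod (poly G 0) = cmod (lead_coeff G) * cmod (poly (\<Prod>x\<in>#proots G. [:-x,1:]) 0)"
        by (simp add: norm_mult)
      also have "\<dots> < cmod (lead_coeff G) * r ^ degree g"
        using prod_mset_bound[OF sm ne] G0 dG by (intro mult_strict_left_mono) auto
      also have "cmod (lead_coeff G) = real_of_int \<bar>lead_coeff g\<bar>"
        by (simp add: G_def mpi_degree coeff_map_poly)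
      also have "real_of_int \<bar>lead_coeff g\<bar> * r ^ degree g \<le> A * r"
      proof -
        have "r ^ degree g \<le> r ^ 1" using dg r0 rle1 by (intro power_decreasing) auto
        moreover have "real_of_int \<bar>lead_coeff g\<bar> \<le> A" using lc by (simp add: A_def)
        ultimately show ?thesis using r0 by (intro mult_mono) auto
      qed
      also have "\<dots> \<le> 1" by fact
      finally have "cmod (poly G 0) < 1" .
      moreover have "cmod (poly G 0) = real_of_int \<bar>coeff g 0\<bar>" by (simp add: G_def mpi_poly0)
      ultimately show False using cg0 by simp
    qed
  qed
  have "length fs \<le> size (filter_mset (\<lambda>x. Rr < cmod x) (proots (map_poly (of_int::int\<Rightarrow>complex) (prod_list fs))))"
    by (rule count_big) (use each in blast)
  then have "length fs \<le> m - j" using big fs(2) by (simp add: F_def)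
  then show ?thesis unfolding prod_at_most_irreducibles_def using fs by blast
qed

end
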